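(* Let $H$ be a subgroup of $\mathbb{Z}^\omega$ of countably infinite rank. Then there exist a group endomorphism $f$ of $\mathbb{Z}^\omega$ and positive integers $(d_n)_{n\in\omega}$ such that $f(H)$ contains the subgroup $\bigoplus_{n\in\omega} d_n\mathbb{Z}\,e_n$ of $\mathbb{Z}^{(\omega)}$, i.e. $d_ne_n\in f(H)$ for every $n\in\omega$.
   Context: $\mathbb{Z}^{\omega}$ is the product of countably many copies of $\mathbb{Z}$; $\mathbb{Z}^{(\omega)}\subseteq\mathbb{Z}^\omega$ is the subgroup of finitely supported sequences; $e_n\in\mathbb{Z}^{(\omega)}$ is the $n$-th standard unit vector. Rank means torsion-free rank. *)

theory Defs
  imports Main "HOL-Library.Countable_Set"
begin

definition subgroup_Zw :: "(nat \<Rightarrow> int) set \<Rightarrow> bool" where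
  "subgroup_Zw H \<longleftrightarrow> (\<lambda>_. 0) \<in> H \<and>
     (\<forall>x\<in>H. \<forall>y\<in>H. (\<lambda>n. x n + y n) \<in> H) \<and>
     (\<forall>x\<in>H. (\<lambda>n. - x n) \<in> H)"

definition endo_Zw :: "((nat \<Rightarrow> int) \<Rightarrow> (nat \<Rightarrow> int)) \<Rightarrow> bool" where
  "endo_Zw f \<longleftrightarrow> (\<forall>x y. f (\<lambda>n. x n + y n) = (\<lambda>n. f x n + f y n))"

definition Z_independent :: "(nat \<Rightarrow> int) set \<Rightarrow> bool" where
  "Z_independent S \<longleftrightarrow> (\<forall>T c. finite T \<and> T \<subseteq> S \<and>
      (\<forall>n. (\<Sum>x\<in>T. c x * x n) = 0) \<longrightarrow> (\<forall>x\<in>T. c x = 0))"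

definition countably_infinite_rank :: "(nat \<Rightarrow> int) set \<Rightarrow> bool" where
  "countably_infinite_rank H \<longleftrightarrow>
     (\<exists>S\<subseteq>H. infinite S \<and> Z_independent S) \<and>
     (\<forall>S\<subseteq>H. Z_independent S \<longrightarrow> countable S)"

definition unit_vec :: "nat \<Rightarrow> nat \<Rightarrow> int" ("e") where
  "unit_vec n = (\<lambda>m. if m = n then 1 else 0)"

end

theory Submission
  imports Defs
begin

lemma elim_dep:
  fixes v :: "'a \<Rightarrow> nat \<Rightarrow> int"
  assumes "finite T" "card T > n"
  shows "\<exists>c. (\<exists>x\<in>T. c x \<noteq> 0) \<and> (\<forall>k<n. (\<Sum>x\<in>T. c x * v x k) = 0)"
  using assms
proof (induction n arbitrary: T v)
  case 0
  then have "T \<noteq> {}" by auto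
  then show ?case by (rule_tac x="\<lambda>_. 1" in exI) auto
next
  case (Suc n)
  show ?case
  proof (cases "\<exists>x0\<in>T. v x0 n \<noteq> 0")
    case False
    from Suc.IH[of T v] Suc.prems obtain c where c: "\<exists>x\<in>T. c x \<noteq> 0"
      "\<forall>k<n. (\<Sum>x\<in>T. c x * v x k) = 0" by auto
    have "\<forall>k<Suc n. (\<Sum>x\<in>T. c x * v x k) = 0"
    proof (intro allI impI)
      fix k assume "k < Suc n"
      then consider "k < n" | "k = n" by linarith
      then show "(\<Sum>x\<in>T. c x * v x k) = 0"
        by cases (use c False in auto)
    qed
    with c show ?thesis by blast
  next
    case True
    then obtain x0 where x0: "x0 \<in> T" "v x0 n \<noteq> 0" by blast
    define a where "a = v x0 n"
    define T' where "T' = T - {x0}"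
    define w where "w x k = a * v x k - v x n * v x0 k" for x k
    have fT': "finite T'" using Suc.prems T'_def by auto
    have cT': "card T' > n" using Suc.prems x0 T'_def by (simp add: card_Diff_singleton)
    from Suc.IH[OF fT' cT', of w] obtain c' where c': "\<exists>x\<in>T'. c' x \<noteq> 0"
      "\<forall>k<n. (\<Sum>x\<in>T'. c' x * w x k) = 0" by auto
    define c where "c x = (if x = x0 then - (\<Sum>y\<in>T'. c' y * v y n) else a * c' x)" for x
    have nz: "\<exists>x\<in>T. c x \<noteq> 0"
    proof -
      from c' obtain x where "x \<in> T'" "c' x \<noteq> 0" by blast
      then show ?thesis using x0 a_def unfolding c_def T'_def
        by (rule_tac bexI[of _ x]) auto
    qed
    have key: "(\<Sum>x\<in>T. c x * v x k) = (\<Sum>x\<in>T'. c' x * w x k)" for k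
    proof -
      have "(\<Sum>x\<in>T. c x * v x k) = c x0 * v x0 k + (\<Sum>x\<in>T'. c x * v x k)"
        using Suc.prems x0 T'_def by (simp add: sum.remove)
      also have "(\<Sum>x\<in>T'. c x * v x k) = (\<Sum>x\<in>T'. a * c' x * v x k)"
        by (rule sum.cong) (auto simp: c_def T'_def)
      also have "c x0 * v x0 k = - (\<Sum>y\<in>T'. c' y * v y n * v x0 k)"
        by (simp add: c_def sum_distrib_right)
      finally show ?thesis
        by (simp add: w_def algebra_simps sum_subtractf sum_distrib_left)
    qed
    have "\<forall>k<Suc n. (\<Sum>x\<in>T. c x * v x k) = 0"
    proof (intro allI impI)
      fix k assume "k < Suc n"
      then consider "k < n" | "k = n" by linarith
      then show "(\<Sum>x\<in>T. c x * v x k) = 0"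
      proof cases
        case 1 then show ?thesis using key c' by auto
      next
        case 2 then show ?thesis using key by (simp add: w_def a_def)
      qed
    qed
    with nz show ?thesis by blast
  qed
qed


definition addf :: "((nat \<Rightarrow> int) \<Rightarrow> int) \<Rightarrow> bool" where
  "addf \<phi> \<longleftrightarrow> (\<forall>x y. \<phi> (\<lambda>n. x n + y n) = \<phi> x + \<phi> y)"

lemma addf_D: "addf \<phi> \<Longrightarrow> \<phi> (\<lambda>n. x n + y n) = \<phi> x + \<phi> y"
  unfolding addf_def by blast

lemma sub_add: "subgroup_Zw H \<Longrightarrow> x \<in> H \<Longrightarrow> y \<in> H \<Longrightarrow> (\<lambda>n. x n + y n) \<in> H"
  unfolding subgroup_Zw_def by blast

lemma sub_neg: "subgroup_Zw H \<Longrightarrow> x \<in> H \<Longrightarrow> (\<lambda>n. - x n) \<in> H"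
  unfolding subgroup_Zw_def by blast

lemma sub_zero: "subgroup_Zw H \<Longrightarrow> (\<lambda>n. 0) \<in> H"
  unfolding subgroup_Zw_def by blast

lemma addf_zero: assumes "addf \<phi>" shows "\<phi> (\<lambda>_. 0) = 0"
proof -
  have "\<phi> (\<lambda>n. (\<lambda>_. 0::int) n + (\<lambda>_. 0) n) = \<phi> (\<lambda>_. 0) + \<phi> (\<lambda>_. 0)"
    using addf_D[OF assms, of "\<lambda>_. 0" "\<lambda>_. 0"] by simp
  then show ?thesis by simp
qed

lemma addf_sum: assumes "addf \<phi>" "finite T"
  shows "\<phi> (\<lambda>m. \<Sum>x\<in>T. g x m) = (\<Sum>x\<in>T. \<phi> (g x))"
  using assms(2)
proof (induction T rule: finite_induct)
  case empty then show ?case using addf_zero[OF assms(1)] by simp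
next
  case (insert a F)
  have "\<phi> (\<lambda>m. \<Sum>x\<in>insert a F. g x m) = \<phi> (\<lambda>m. g a m + (\<Sum>x\<in>F. g x m))"
    using insert by simp
  also have "\<dots> = \<phi> (g a) + \<phi> (\<lambda>m. \<Sum>x\<in>F. g x m)"
    using addf_D[OF assms(1), of "g a" "\<lambda>m. \<Sum>x\<in>F. g x m"] by simp
  finally show ?case using insert by simp
qed

lemma addf_neg: assumes "addf \<phi>" shows "\<phi> (\<lambda>m. - x m) = - \<phi> x"
proof -
  have "\<phi> (\<lambda>m. x m + - x m) = \<phi> x + \<phi> (\<lambda>m. - x m)" using addf_D[OF assms, of x "\<lambda>m. - x m"] by simp
  then show ?thesis using addf_zero[OF assms] by simp
qed

lemma addf_nat_mult: assumes "addf \<phi>" shows "\<phi> (\<lambda>m. int k * x m) = int k * \<phi> x"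
proof (induction k)
  case 0 then show ?case using addf_zero[OF assms] by simp
next
  case (Suc k)
  have "\<phi> (\<lambda>m. int (Suc k) * x m) = \<phi> (\<lambda>m. int k * x m + x m)" by (simp add: algebra_simps)
  also have "\<dots> = int k * \<phi> x + \<phi> x" using addf_D[OF assms, of "\<lambda>m. int k * x m" x] Suc by simp
  finally show ?case by (simp add: algebra_simps)
qed

lemma addf_mult: assumes "addf \<phi>" shows "\<phi> (\<lambda>m. c * x m) = c * \<phi> x"
proof (cases "c \<ge> 0")
  case True
  then obtain k where "c = int k" by (metis nonneg_eq_int)
  then show ?thesis using addf_nat_mult[OF assms] by simp
next
  case False
  then obtain k where k: "c = - int k" by (metis neg_int_cases linorder_not_le less_imp_le)
  have "\<phi> (\<lambda>m. c * x m) = \<phi> (\<lambda>m. - (int k * x m))" using k by simp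
  also have "\<dots> = - \<phi> (\<lambda>m. int k * x m)" by (rule addf_neg[OF assms])
  finally show ?thesis using addf_nat_mult[OF assms] k by simp
qed

lemma addf_lincomb: assumes "addf \<phi>" "finite T"
  shows "\<phi> (\<lambda>m. \<Sum>x\<in>T. c x * x m) = (\<Sum>x\<in>T. c x * \<phi> x)"
  using addf_sum[OF assms, of "\<lambda>x m. c x * x m"] addf_mult[OF assms(1)] by simp

lemma sub_nat_mult: assumes "subgroup_Zw H" "x \<in> H" shows "(\<lambda>m. int k * x m) \<in> H"
proof (induction k)
  case 0 then show ?case using assms unfolding subgroup_Zw_def by simp
next
  case (Suc k)
  then have "(\<lambda>m. int k * x m + x m) \<in> H" using sub_add[OF assms(1) Suc assms(2)] by simp
  then show ?case by (simp add: algebra_simps)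
qed

lemma sub_mult: assumes "subgroup_Zw H" "x \<in> H" shows "(\<lambda>m. c * x m) \<in> H"
proof (cases "c \<ge> 0")
  case True
  then obtain k where "c = int k" by (metis nonneg_eq_int)
  then show ?thesis using sub_nat_mult[OF assms] by simp
next
  case False
  then obtain k where k: "c = - int k" by (metis neg_int_cases linorder_not_le less_imp_le)
  have "(\<lambda>m. - (int k * x m)) \<in> H" using sub_neg[OF assms(1) sub_nat_mult[OF assms, of k]] by simp
  then show ?thesis using k by simp
qed

lemma sub_lincomb: assumes "subgroup_Zw H" "finite T" "T \<subseteq> H"
  shows "(\<lambda>m. \<Sum>x\<in>T. c x * x m) \<in> H"
  using assms(2,3)
proof (induction T rule: finite_induct)
  case empty then show ?case using sub_zero[OF assms(1)] by simp
next
  case (insert a F)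
  then have "(\<lambda>m. c a * a m) \<in> H" "(\<lambda>m. \<Sum>x\<in>F. c x * x m) \<in> H"
    using sub_mult[OF assms(1)] by auto
  from sub_add[OF assms(1) this] show ?case using insert by simp
qed


definition Inv :: "(nat \<Rightarrow> int) set \<Rightarrow> nat \<Rightarrow> (nat \<Rightarrow> nat \<Rightarrow> int) \<Rightarrow> (nat \<Rightarrow> (nat \<Rightarrow> int) \<Rightarrow> int) \<Rightarrow> bool" where
  "Inv H n hs ps \<longleftrightarrow> (\<forall>i<n. hs i \<in> H \<and> addf (ps i) \<and> ps i (hs i) > 0 \<and>
      (\<forall>j<n. j \<noteq> i \<longrightarrow> ps i (hs j) = 0))"

lemma step:
  assumes H: "subgroup_Zw H" and R: "countably_infinite_rank H" and I: "Inv H n hs ps"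
  shows "\<exists>h p. Inv H (Suc n) (hs(n:=h)) (ps(n:=p))"
proof -
  from R obtain S where S: "S \<subseteq> H" "infinite S" "Z_independent S"
    unfolding countably_infinite_rank_def by blast
  from infinite_arbitrarily_large[OF S(2)] obtain T where T: "finite T" "card T = Suc n" "T \<subseteq> S"
    by blast
  from elim_dep[OF T(1), of n "\<lambda>x k. ps k x"] T(2) obtain c where
    c: "\<exists>x\<in>T. c x \<noteq> 0" "\<forall>k<n. (\<Sum>x\<in>T. c x * ps k x) = 0" by auto
  define h where "h = (\<lambda>m. \<Sum>x\<in>T. c x * x m)"
  have hH: "h \<in> H" unfolding h_def using sub_lincomb[OF H T(1)] T(3) S(1) by blast
  have hker: "ps k h = 0" if "k < n" for k
    using addf_lincomb[of "ps k" T c] I that T(1) c(2) unfolding Inv_def h_def by auto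
  have "\<exists>k0. h k0 \<noteq> 0"
  proof (rule ccontr)
    assume "\<not> ?thesis"
    then have "\<forall>m. (\<Sum>x\<in>T. c x * x m) = 0" unfolding h_def by auto
    with S(3) T have "\<forall>x\<in>T. c x = 0" unfolding Z_independent_def by blast
    with c(1) show False by blast
  qed
  then obtain k0 where k0: "h k0 \<noteq> 0" by blast
  define d where "d i = ps i (hs i)" for i
  define D where "D = (\<Prod>i<n. d i)"
  have dpos: "d i > 0" if "i < n" for i using I that unfolding Inv_def d_def by auto
  have Dpos: "D > 0" unfolding D_def using dpos by (intro prod_pos) auto
  have Ddiv: "(D div d i) * d i = D" if "i < n" for i
    proof -
    have "d i dvd D" unfolding D_def using that by (intro dvd_prodI) auto
    then show ?thesis by simp
  qed
  define q where "q x = D * x k0 - (\<Sum>i<n. (D div d i) * hs i k0 * ps i x)" for x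
  have addq: "addf q"
    unfolding addf_def
  proof (intro allI)
    fix x y
    have "(\<Sum>i<n. (D div d i) * hs i k0 * ps i (\<lambda>m. x m + y m)) =
          (\<Sum>i<n. (D div d i) * hs i k0 * ps i x + (D div d i) * hs i k0 * ps i y)"
    proof (rule sum.cong)
      fix i assume "i \<in> {..<n}"
      then have "addf (ps i)" using I unfolding Inv_def by auto
      then show "(D div d i) * hs i k0 * ps i (\<lambda>m. x m + y m) =
          (D div d i) * hs i k0 * ps i x + (D div d i) * hs i k0 * ps i y"
        using addf_D[of "ps i" x y] by (simp add: algebra_simps)
    qed simp
    then show "q (\<lambda>m. x m + y m) = q x + q y"
      unfolding q_def by (simp add: sum.distrib algebra_simps)
  qed
  have qhs: "q (hs j) = 0" if j: "j < n" for j
  proof -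
    have "(\<Sum>i<n. (D div d i) * hs i k0 * ps i (hs j)) =
        (D div d j) * hs j k0 * ps j (hs j) + (\<Sum>i\<in>{..<n} - {j}. (D div d i) * hs i k0 * ps i (hs j))"
      using j by (simp add: sum.remove)
    also have "(\<Sum>i\<in>{..<n} - {j}. (D div d i) * hs i k0 * ps i (hs j)) = 0"
      using I j unfolding Inv_def by (intro sum.neutral) auto
    finally have "(\<Sum>i<n. (D div d i) * hs i k0 * ps i (hs j)) = D * hs j k0"
      using Ddiv[OF j] unfolding d_def by (simp add: algebra_simps)
    then show ?thesis unfolding q_def by simp
  qed
  have qh: "q h = D * h k0" unfolding q_def using hker by simp
  then have qhnz: "q h \<noteq> 0" using Dpos k0 by simp
  define p where "p x = q h * q x" for x
  have addp: "addf p" unfolding p_def addf_def using addq addf_D[OF addq]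
    by (simp add: algebra_simps)
  have ph: "p h > 0" unfolding p_def using qhnz by (simp add: zero_less_mult_iff) (use qhnz in linarith)
  have phs: "p (hs j) = 0" if "j < n" for j unfolding p_def using qhs[OF that] by simp
  have "Inv H (Suc n) (hs(n:=h)) (ps(n:=p))"
    unfolding Inv_def
  proof (intro allI impI)
    fix i assume i: "i < Suc n"
    show "(hs(n := h)) i \<in> H \<and> addf ((ps(n := p)) i) \<and> 0 < (ps(n := p)) i ((hs(n := h)) i) \<and>
         (\<forall>j<Suc n. j \<noteq> i \<longrightarrow> (ps(n := p)) i ((hs(n := h)) j) = 0)"
    proof (cases "i = n")
      case True
      then show ?thesis using hH addp ph phs by auto
    next
      case False
      then have "i < n" using i by simp
      then show ?thesis using I False hker unfolding Inv_def
        by (auto simp: less_Suc_eq)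
    qed
  qed
  then show ?thesis by blast
qed


primrec build :: "(nat \<Rightarrow> int) set \<Rightarrow> nat \<Rightarrow> (nat \<Rightarrow> nat \<Rightarrow> int) \<times> (nat \<Rightarrow> (nat \<Rightarrow> int) \<Rightarrow> int)" where
  "build H 0 = (\<lambda>_ _. 0, \<lambda>_ _. 0)"
| "build H (Suc n) = (let hp = (SOME hp. Inv H (Suc n) ((fst (build H n))(n := fst hp)) ((snd (build H n))(n := snd hp)))
     in ((fst (build H n))(n := fst hp), (snd (build H n))(n := snd hp)))"

lemma build_inv:
  assumes H: "subgroup_Zw H" and R: "countably_infinite_rank H"
  shows "Inv H n (fst (build H n)) (snd (build H n))"
proof (induction n)
  case 0 then show ?case unfolding Inv_def by simp
next
  case (Suc n)
  from step[OF H R Suc] have "\<exists>hp. Inv H (Suc n) ((fst (build H n))(n := fst hp)) ((snd (build H n))(n := snd hp))"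
    by auto
  from someI_ex[OF this] show ?case by (simp only: build.simps Let_def fst_conv snd_conv)
qed

lemma build_stable:
  "i < N \<Longrightarrow> fst (build H N) i = fst (build H (Suc i)) i \<and> snd (build H N) i = snd (build H (Suc i)) i"
proof (induction N)
  case 0 then show ?case by simp
next
  case (Suc N)
  show ?case
  proof (cases "i = N")
    case True then show ?thesis by simp
  next
    case False
    then have "i < N" using Suc.prems by simp
    with Suc.IH False show ?thesis by (simp add: Let_def)
  qed
qed

theorem mainTheorem3:
  fixes H :: "(nat \<Rightarrow> int) set"
  assumes "subgroup_Zw H" and "countably_infinite_rank H"
  shows "\<exists>f d. endo_Zw f \<and> (\<forall>n. d n > (0::int)) \<and>
           (\<forall>n. (\<lambda>m. d n * unit_vec n m) \<in> f ` H)"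
proof -
  define hs where "hs i = fst (build H (Suc i)) i" for i
  define ps where "ps i = snd (build H (Suc i)) i" for i
  have facts: "hs i \<in> H \<and> addf (ps i) \<and> ps i (hs i) > 0 \<and> (j \<noteq> i \<longrightarrow> ps i (hs j) = 0)" for i j
  proof -
    define N where "N = Suc (max i j)"
    have iN: "i < N" "j < N" unfolding N_def by auto
    have "Inv H N (fst (build H N)) (snd (build H N))" by (rule build_inv[OF assms])
    moreover have "hs i = fst (build H N) i" "ps i = snd (build H N) i" "hs j = fst (build H N) j"
      using build_stable[OF iN(1), of H] build_stable[OF iN(2), of H] unfolding hs_def ps_def by auto
    ultimately show ?thesis using iN unfolding Inv_def by (simp del: build.simps)
  qed
  define f where "f x = (\<lambda>n. ps n x)" for x
  define d where "d n = ps n (hs n)" for n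
  have "endo_Zw f" unfolding endo_Zw_def f_def using facts addf_D by blast
  moreover have "\<forall>n. d n > 0" unfolding d_def using facts by blast
  moreover have "(\<lambda>m. d n * unit_vec n m) \<in> f ` H" for n
  proof
    show "hs n \<in> H" using facts by blast
    show "(\<lambda>m. d n * unit_vec n m) = f (hs n)"
      unfolding f_def d_def unit_vec_def using facts by fastforce
  qed
  ultimately show ?thesis by blast
qed

end
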